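(* There exists an algorithm which, given {\sf NACOND} access to an unknown distribution $p$ on $[n]$, an explicit description of a distribution $q$ on $[n]$, and a parameter $\varepsilon\in(0,1]$, makes $\tilde O\left(\frac{\log^2 n}{\varepsilon^2}\right)$ queries to the oracle on $p$ and distinguishes between the cases $p = q$ and $d_{\mathrm{TV}}(p,q) \geq \varepsilon$ with probability at least $2/3$.
   Context: Distributions are over the finite domain $[n]=\{1,\dots,n\}$; for $S\subseteq[n]$, $p(S)=\sum_{i\in S}p(i)$. A conditional sampling oracle for $p$ takes as input a query set $S\subseteq[n]$ and returns a symbol $i\in S$ drawn with probability $p(i)/p(S)$; if $p(S)=0$ it returns a uniformly random element of $S$. In the non-adaptive model ({\sf NACOND}), the algorithm must specify all of its query sets (possibly using its own randomness) before seeing the result of any query. Total variation distance: $d_{\mathrm{TV}}(p,q)=\frac12\sum_{i\in[n]}|p(i)-q(i)|$. $\log$ is base 2; $\tilde O(\cdot)$ hides factors polylogarithmic in its argument (e.g. factors polynomial in $\log\log n$ and $\log(1/\varepsilon)$). *)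

theory Defs
  imports "HOL-Probability.Probability"
begin

definition is_dist_on :: "nat \<Rightarrow> nat pmf \<Rightarrow> bool" where
  "is_dist_on n p \<longleftrightarrow> set_pmf p \<subseteq> {1..n}"

definition dTV :: "nat \<Rightarrow> nat pmf \<Rightarrow> nat pmf \<Rightarrow> real" where
  "dTV n p q = (1/2) * (\<Sum>i\<in>{1..n}. \<bar>pmf p i - pmf q i\<bar>)"

definition cond_oracle :: "nat pmf \<Rightarrow> nat set \<Rightarrow> nat pmf" where
  "cond_oracle p S = (if measure_pmf.prob p S = 0 then pmf_of_set S else cond_pmf p S)"

fun answers :: "nat pmf \<Rightarrow> nat set list \<Rightarrow> nat list pmf" where
  "answers p [] = return_pmf []"
| "answers p (S # Ss) =
     bind_pmf (cond_oracle p S) (\<lambda>x. map_pmf (\<lambda>xs. x # xs) (answers p Ss))"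

text \<open>A NACOND algorithm, on inputs (n, q, eps), draws (using its own randomness)
  a list of query sets together with a decision function of the answers, all before
  seeing any answer. Output True means "accept: p = q".\<close>
type_synonym nacond_alg = "nat \<Rightarrow> nat pmf \<Rightarrow> real \<Rightarrow> (nat set list \<times> (nat list \<Rightarrow> bool)) pmf"

definition run_alg :: "nacond_alg \<Rightarrow> nat \<Rightarrow> nat pmf \<Rightarrow> real \<Rightarrow> nat pmf \<Rightarrow> bool pmf" where
  "run_alg A n q eps p =
     bind_pmf (A n q eps) (\<lambda>(Qs, dec). map_pmf dec (answers p Qs))"

text \<open>Query budget O~(log^2 n / eps^2): C * L * (1 + ln(1+L))^k with L = log^2 n / eps^2
  (log n replaced by log (n+1) so that the bound is positive for n = 1).\<close>
definition query_bound :: "real \<Rightarrow> nat \<Rightarrow> nat \<Rightarrow> real \<Rightarrow> real" where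
  "query_bound C k n eps =
     (let L = (log 2 (real n + 1))^2 / eps^2 in C * L * (1 + ln (1 + L)) ^ k)"

end

theory Submission
  imports Defs "HOL-Probability.Probability"
begin



lemma integral_bind_pmf':
  fixes f :: "'b \<Rightarrow> real"
  assumes "\<And>x. \<bar>f x\<bar> \<le> B"
  shows "(\<integral>x. f x \<partial>measure_pmf (bind_pmf M N)) = (\<integral>x. (\<integral>y. f y \<partial>measure_pmf (N x)) \<partial>measure_pmf M)"
  unfolding measure_pmf_bind
  apply (rule integral_bind[where K="count_space UNIV" and B=B and B'=1])
  using assms by (auto simp: measure_pmf.finite_measure_axioms measure_pmf_in_subprob_algebra)

lemma integrable_pmf_bounded:
  fixes f :: "'b \<Rightarrow> real"
  assumes "\<And>x. \<bar>f x\<bar> \<le> B"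
  shows "integrable (measure_pmf M) f"
  by (rule measure_pmf.integrable_const_bound[where B=B]) (use assms in auto)

lemma answers_append:
  "answers p (xs @ ys) = bind_pmf (answers p xs) (\<lambda>a. map_pmf (\<lambda>b. a @ b) (answers p ys))"
proof (induction xs)
  case Nil
  have "(@) [] = (\<lambda>x::nat list. x)" by auto
  then show ?case by (simp add: bind_return_pmf)
next
  case (Cons S xs)
  show ?case
    by (simp add: Cons bind_assoc_pmf map_pmf_def bind_return_pmf)
qed

lemma answers_length: "a \<in> set_pmf (answers p xs) \<Longrightarrow> length a = length xs"
  by (induction xs arbitrary: a) auto

lemma answers_set: "a \<in> set_pmf (answers p xs) \<Longrightarrow> i < length xs \<Longrightarrow> a ! i \<in> set_pmf (cond_oracle p (xs ! i))"
  by (induction xs arbitrary: a i) (auto simp: nth_Cons split: nat.splits)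

lemma answers_replicate_count:
  "map_pmf (\<lambda>ys. length (filter P ys)) (answers p (replicate k S))
     = binomial_pmf k (measure_pmf.prob (cond_oracle p S) {x. P x})"
proof (induction k)
  case 0
  then show ?case by (simp add: binomial_pmf_0)
next
  case (Suc k)
  let ?a = "measure_pmf.prob (cond_oracle p S) {x. P x}"
  have a: "?a \<in> {0..1}" by auto
  have "map_pmf (\<lambda>ys. length (filter P ys)) (answers p (replicate (Suc k) S))
     = bind_pmf (cond_oracle p S) (\<lambda>x. map_pmf (\<lambda>c. (if P x then 1 else 0) + c)
          (map_pmf (\<lambda>ys. length (filter P ys)) (answers p (replicate k S))))"
    by (auto simp: map_bind_pmf pmf.map_comp o_def intro!: bind_pmf_cong map_pmf_cong)
  also have "\<dots> = bind_pmf (map_pmf P (cond_oracle p S)) (\<lambda>b. map_pmf (\<lambda>c. (if b then 1 else 0) + c)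
          (binomial_pmf k ?a))"
    by (simp add: Suc bind_map_pmf)
  also have "map_pmf P (cond_oracle p S) = bernoulli_pmf ?a"
  proof (rule pmf_eqI)
    fix i :: bool
    have c: "measure_pmf.prob (cond_oracle p S) {x. \<not> P x} = 1 - ?a"
      using measure_pmf.prob_compl[of "{x. P x}" "cond_oracle p S"]
      by (simp add: Compl_eq_Diff_UNIV[symmetric] Collect_neg_eq)
    show "pmf (map_pmf P (cond_oracle p S)) i = pmf (bernoulli_pmf ?a) i"
      using c by (cases i) (auto simp: pmf_map vimage_def)
  qed
  finally show ?case
    by (simp add: binomial_pmf_Suc[OF a] map_pmf_def)
qed

datatype test = Test (tS: "nat set") (tS0: "nat set") (tk: nat) (ta: real) (tr: real)

definition passes :: "test \<Rightarrow> nat list \<Rightarrow> bool" where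
  "passes t ys = (\<bar>real (length (filter (\<lambda>y. y \<in> tS0 t) ys)) / real (tk t) - ta t\<bar> \<le> tr t)"

fun queries :: "test list \<Rightarrow> nat set list" where
  "queries [] = []"
| "queries (t # ts) = replicate (tk t) (tS t) @ queries ts"

fun dect :: "test list \<Rightarrow> nat list \<Rightarrow> bool" where
  "dect [] xs = True"
| "dect (t # ts) xs = (passes t (take (tk t) xs) \<and> dect ts (drop (tk t) xs))"

definition spass :: "nat pmf \<Rightarrow> test \<Rightarrow> real" where
  "spass p t = pmf (map_pmf (passes t) (answers p (replicate (tk t) (tS t)))) True"

lemma spass_bounds: "0 \<le> spass p t" "spass p t \<le> 1"
  by (auto simp: spass_def pmf_le_1)

lemma acc_prod:
  "pmf (map_pmf (dect ts) (answers p (queries ts))) True = prod_list (map (spass p) ts)"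
proof (induction ts)
  case Nil
  then show ?case by simp
next
  case (Cons t ts)
  let ?P = "map_pmf (passes t) (answers p (replicate (tk t) (tS t)))"
  let ?A = "map_pmf (dect ts) (answers p (queries ts))"
  have "map_pmf (dect (t # ts)) (answers p (queries (t # ts)))
      = bind_pmf (answers p (replicate (tk t) (tS t)))
          (\<lambda>a. map_pmf (\<lambda>b. dect (t # ts) (a @ b)) (answers p (queries ts)))"
    by (simp add: answers_append map_bind_pmf pmf.map_comp o_def)
  also have "\<dots> = bind_pmf (answers p (replicate (tk t) (tS t)))
          (\<lambda>a. map_pmf (\<lambda>c. passes t a \<and> c) ?A)"
    by (intro bind_pmf_cong refl) (auto simp: pmf.map_comp o_def dest: answers_length)
  also have "\<dots> = bind_pmf ?P (\<lambda>b. map_pmf (\<lambda>c. b \<and> c) ?A)"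
    by (simp add: bind_map_pmf)
  finally have eq: "map_pmf (dect (t # ts)) (answers p (queries (t # ts))) = \<dots>" .
  have "pmf (bind_pmf ?P (\<lambda>b. map_pmf (\<lambda>c. b \<and> c) ?A)) True
      = (\<integral>b. (if b then pmf ?A True else 0) \<partial>measure_pmf ?P)"
    unfolding pmf_bind
    by (intro Bochner_Integration.integral_cong refl) (auto simp: pmf_map vimage_def measure_pmf_single)
  also have "\<dots> = (\<Sum>b\<in>UNIV. (if b then pmf ?A True else 0) * pmf ?P b)"
    by (rule integral_measure_pmf_real) auto
  also have "\<dots> = pmf ?P True * pmf ?A True"
    by (simp add: UNIV_bool)
  finally have r: "pmf (bind_pmf ?P (\<lambda>b. map_pmf (\<lambda>c. b \<and> c) ?A)) True = pmf ?P True * pmf ?A True" .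
  show ?case by (simp only: eq r Cons.IH prod_list.Cons list.map spass_def)
qed

definition alpha :: "nat pmf \<Rightarrow> test \<Rightarrow> real" where
  "alpha p t = measure_pmf.prob (cond_oracle p (tS t)) (tS0 t)"

lemma spass_binom:
  "spass p t = measure_pmf.prob (binomial_pmf (tk t) (alpha p t))
      {c. \<bar>real c / real (tk t) - ta t\<bar> \<le> tr t}"
proof -
  have "map_pmf (passes t) (answers p (replicate (tk t) (tS t)))
     = map_pmf (\<lambda>c. \<bar>real c / real (tk t) - ta t\<bar> \<le> tr t)
         (map_pmf (\<lambda>ys. length (filter (\<lambda>y. y \<in> tS0 t) ys)) (answers p (replicate (tk t) (tS t))))"
    by (simp add: pmf.map_comp o_def passes_def[abs_def])
  also have "\<dots> = map_pmf (\<lambda>c. \<bar>real c / real (tk t) - ta t\<bar> \<le> tr t) (binomial_pmf (tk t) (alpha p t))"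
    by (simp add: answers_replicate_count alpha_def)
  finally show ?thesis by (simp add: spass_def pmf_map vimage_def)
qed

lemma hoeff:
  assumes "k > 0" "a \<in> {0..1}" "e \<ge> 0"
  shows "measure_pmf.prob (binomial_pmf k a) {c. \<bar>real c / real k - a\<bar> \<ge> e} \<le> 2 * exp (-2 * real k * e\<^sup>2)"
proof -
  interpret binomial_distribution k a by unfold_locales (use assms in auto)
  show ?thesis using prob_abs_ge'[OF assms(1) assms(3)] by simp
qed

lemma spass_null:
  assumes "tk t > 0" "tr t \<ge> 0" "ta t = alpha p t"
  shows "spass p t \<ge> 1 - 2 * exp (-2 * real (tk t) * (tr t)\<^sup>2)"
proof -
  let ?M = "binomial_pmf (tk t) (alpha p t)"
  have a: "alpha p t \<in> {0..1}" by (auto simp: alpha_def)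
  have "UNIV - {c. \<bar>real c / real (tk t) - alpha p t\<bar> \<ge> tr t} \<subseteq> {c. \<bar>real c / real (tk t) - ta t\<bar> \<le> tr t}"
    using assms by auto
  hence "measure_pmf.prob ?M (UNIV - {c. \<bar>real c / real (tk t) - alpha p t\<bar> \<ge> tr t}) \<le> spass p t"
    unfolding spass_binom by (intro measure_pmf.finite_measure_mono) auto
  moreover have "measure_pmf.prob ?M (UNIV - {c. \<bar>real c / real (tk t) - alpha p t\<bar> \<ge> tr t})
     = 1 - measure_pmf.prob ?M {c. \<bar>real c / real (tk t) - alpha p t\<bar> \<ge> tr t}"
    using measure_pmf.prob_compl by auto
  moreover note hoeff[OF assms(1) a assms(2)]
  ultimately show ?thesis by linarith
qed

lemma spass_far:
  assumes "tk t > 0" "tr t \<ge> 0" "\<bar>alpha p t - ta t\<bar> \<ge> 2 * tr t"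
  shows "spass p t \<le> 2 * exp (-2 * real (tk t) * (tr t)\<^sup>2)"
proof -
  let ?M = "binomial_pmf (tk t) (alpha p t)"
  have a: "alpha p t \<in> {0..1}" by (auto simp: alpha_def)
  have "{c. \<bar>real c / real (tk t) - ta t\<bar> \<le> tr t} \<subseteq> {c. \<bar>real c / real (tk t) - alpha p t\<bar> \<ge> tr t}"
    using assms by auto
  hence "spass p t \<le> measure_pmf.prob ?M {c. \<bar>real c / real (tk t) - alpha p t\<bar> \<ge> tr t}"
    unfolding spass_binom by (intro measure_pmf.finite_measure_mono) auto
  with hoeff[OF assms(1) a assms(2)] show ?thesis by linarith
qed

fun iid :: "nat \<Rightarrow> 'a pmf \<Rightarrow> 'a list pmf" where
  "iid 0 D = return_pmf []"
| "iid (Suc m) D = bind_pmf D (\<lambda>x. map_pmf (Cons x) (iid m D))"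

fun blk :: "(nat \<Rightarrow> nat) \<Rightarrow> (nat \<Rightarrow> 'a pmf) \<Rightarrow> nat \<Rightarrow> 'a list pmf" where
  "blk m T 0 = return_pmf []"
| "blk m T (Suc j) = bind_pmf (blk m T j) (\<lambda>a. map_pmf (\<lambda>b. a @ b) (iid (m (Suc j)) (T (Suc j))))"

lemma prod_list_01:
  assumes "\<And>x. 0 \<le> s x" "\<And>x. s x \<le> (1::real)"
  shows "0 \<le> prod_list (map s xs) \<and> prod_list (map s xs) \<le> 1"
  by (induction xs) (auto intro!: mult_le_one simp: assms)

lemma E_iid:
  assumes "\<And>x. 0 \<le> s x" "\<And>x. s x \<le> (1::real)"
  shows "(\<integral>ts. prod_list (map s ts) \<partial>measure_pmf (iid m D)) = (\<integral>x. s x \<partial>measure_pmf D) ^ m"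
proof (induction m)
  case 0
  then show ?case by simp
next
  case (Suc m)
  have b: "\<bar>prod_list (map s xs)\<bar> \<le> 1" for xs using prod_list_01[OF assms, where xs=xs] by auto
  have "(\<integral>ts. prod_list (map s ts) \<partial>measure_pmf (iid (Suc m) D))
      = (\<integral>x. (\<integral>ts. prod_list (map s ts) \<partial>measure_pmf (map_pmf (Cons x) (iid m D))) \<partial>measure_pmf D)"
    by (simp only: iid.simps integral_bind_pmf'[OF b])
  also have "\<dots> = (\<integral>x. s x * (\<integral>x. s x \<partial>measure_pmf D) ^ m \<partial>measure_pmf D)"
    by (simp add: Suc)
  also have "\<dots> = (\<integral>x. s x \<partial>measure_pmf D) ^ Suc m"
    by simp
  finally show ?case .
qed

lemma blk_le:
  assumes "\<And>x. 0 \<le> s x" "\<And>x. s x \<le> (1::real)" "1 \<le> j" "j \<le> J"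
  shows "(\<integral>ts. prod_list (map s ts) \<partial>measure_pmf (blk m T J))
       \<le> (\<integral>ts. prod_list (map s ts) \<partial>measure_pmf (iid (m j) (T j)))"
proof -
  have pl: "\<And>xs. 0 \<le> prod_list (map s xs) \<and> prod_list (map s xs) \<le> 1"
    using prod_list_01 assms(1,2) by blast
  show ?thesis using assms(3,4)
proof (induction J)
  case 0
  then show ?case by simp
next
  case (Suc J)
  have b: "\<bar>prod_list (map s xs)\<bar> \<le> 1" for xs using pl[of xs] by auto
  note I = integrable_pmf_bounded[OF b]
  have "(\<integral>ts. prod_list (map s ts) \<partial>measure_pmf (blk m T (Suc J)))
      = (\<integral>a. (\<integral>b. prod_list (map s a) * prod_list (map s b) \<partial>measure_pmf (iid (m (Suc J)) (T (Suc J)))) \<partial>measure_pmf (blk m T J))"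
    by (simp only: blk.simps integral_bind_pmf'[OF b]) simp
  also have "\<dots> = (\<integral>a. prod_list (map s a) * (\<integral>b. prod_list (map s b) \<partial>measure_pmf (iid (m (Suc J)) (T (Suc J)))) \<partial>measure_pmf (blk m T J))"
    by simp
  finally have eq: "(\<integral>ts. prod_list (map s ts) \<partial>measure_pmf (blk m T (Suc J))) = \<dots>" .
  let ?c = "(\<integral>b. prod_list (map s b) \<partial>measure_pmf (iid (m (Suc J)) (T (Suc J))))"
  have c0: "0 \<le> ?c"
    using pl by (auto intro!: integral_nonneg_AE)
  have "?c \<le> (\<integral>b. 1 \<partial>measure_pmf (iid (m (Suc J)) (T (Suc J))))"
    using pl by (intro integral_mono I) auto
  hence c01: "0 \<le> ?c" "?c \<le> 1" using c0 by simp_all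
  show ?case
  proof (cases "j = Suc J")
    case True
    have "(\<integral>a. prod_list (map s a) * ?c \<partial>measure_pmf (blk m T J)) \<le> (\<integral>a. ?c \<partial>measure_pmf (blk m T J))"
      using pl c01
      by (intro integral_mono integrable_mult_left I measure_pmf.integrable_const) (auto intro!: mult_left_le_one_le)
    then show ?thesis using eq True by simp
  next
    case False
    hence "j \<le> J" using Suc by auto
    have "(\<integral>a. prod_list (map s a) * ?c \<partial>measure_pmf (blk m T J)) \<le> (\<integral>a. prod_list (map s a) \<partial>measure_pmf (blk m T J))"
      using pl c01
      by (intro integral_mono integrable_mult_left I) (auto intro!: mult_right_le_one_le)
    then show ?thesis using eq Suc.IH[OF Suc.prems(1) \<open>j \<le> J\<close>] by simp
  qed
qed
qed

lemma pmf_CO: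
  assumes "finite S" "S \<noteq> {}"
  shows "pmf (cond_oracle p S) y = (if measure_pmf.prob p S = 0 then (if y \<in> S then 1 / real (card S) else 0)
     else (if y \<in> S then pmf p y / measure_pmf.prob p S else 0))"
proof (cases "measure_pmf.prob p S = 0")
  case True
  then show ?thesis using assms by (simp add: cond_oracle_def indicator_def)
next
  case False
  hence "set_pmf p \<inter> S \<noteq> {}" by (simp add: measure_pmf_zero_iff)
  then show ?thesis using False by (simp add: cond_oracle_def pmf_cond)
qed

lemma prob_CO:
  assumes "finite S" "S \<noteq> {}" "A \<subseteq> S"
  shows "measure_pmf.prob (cond_oracle p S) A = (if measure_pmf.prob p S = 0 then real (card A) / real (card S)
     else measure_pmf.prob p A / measure_pmf.prob p S)"
proof -
  have fA: "finite A" using assms finite_subset by blast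
  have "measure_pmf.prob (cond_oracle p S) A = (\<Sum>y\<in>A. pmf (cond_oracle p S) y)"
    by (rule measure_measure_pmf_finite[OF fA])
  also have "\<dots> = (\<Sum>y\<in>A. (if measure_pmf.prob p S = 0 then 1 / real (card S) else pmf p y / measure_pmf.prob p S))"
    using assms by (intro sum.cong refl) (auto simp: pmf_CO)
  also have "\<dots> = (if measure_pmf.prob p S = 0 then real (card A) / real (card S)
     else measure_pmf.prob p A / measure_pmf.prob p S)"
    by (auto simp: measure_measure_pmf_finite[OF fA] sum_divide_distrib)
  finally show ?thesis .
qed

lemma set_CO:
  assumes "finite S" "S \<noteq> {}"
  shows "set_pmf (cond_oracle p S) \<subseteq> S"
  using assms by (auto simp: set_pmf_eq pmf_CO split: if_splits)

lemma CO_consistent: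
  assumes "finite v" "c \<subseteq> v" "y \<in> c"
  shows "pmf (cond_oracle p v) y = measure_pmf.prob (cond_oracle p v) c * pmf (cond_oracle p c) y"
proof -
  have cne: "c \<noteq> {}" "v \<noteq> {}" using assms by auto
  have fc: "finite c" using assms finite_subset by blast
  have mono: "measure_pmf.prob p c \<le> measure_pmf.prob p v"
    using assms by (intro measure_pmf.finite_measure_mono) auto
  have ymono: "pmf p y \<le> measure_pmf.prob p c"
    using assms measure_pmf.finite_measure_mono[of "{y}" c p] by (simp add: measure_pmf_single)
  have cardc: "card c > 0" using fc cne by (simp add: card_gt_0_iff)
  show ?thesis
  proof (cases "measure_pmf.prob p v = 0")
    case True
    hence "measure_pmf.prob p c = 0" using mono by (simp add: order_antisym)
    then show ?thesis using True assms cne fc cardc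
      by (simp add: pmf_CO prob_CO subsetD)
  next
    case False
    show ?thesis
    proof (cases "measure_pmf.prob p c = 0")
      case True
      hence "pmf p y = 0" using ymono by (simp add: order_antisym)
      then show ?thesis using True False assms cne fc
        by (simp add: pmf_CO prob_CO subsetD)
    next
      case False2: False
      then show ?thesis using False assms cne fc
        by (simp add: pmf_CO prob_CO subsetD)
    qed
  qed
qed

lemma CO_mass:
  assumes "finite v" "c \<subseteq> v" "c \<noteq> {}"
  shows "measure_pmf.prob p c = measure_pmf.prob p v * measure_pmf.prob (cond_oracle p v) c"
proof -
  have mono: "measure_pmf.prob p c \<le> measure_pmf.prob p v"
    using assms by (intro measure_pmf.finite_measure_mono) auto
  have vne: "v \<noteq> {}" using assms by auto
  show ?thesis
  proof (cases "measure_pmf.prob p v = 0")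
    case True
    hence "measure_pmf.prob p c = 0" using mono by (simp add: order_antisym)
    then show ?thesis using True by simp
  qed (use assms vne in \<open>simp add: prob_CO\<close>)
qed

lemma CO_compl:
  assumes "finite v" "v \<noteq> {}" "c \<subseteq> v"
  shows "measure_pmf.prob (cond_oracle p v) (v - c) = 1 - measure_pmf.prob (cond_oracle p v) c"
proof -
  have "measure_pmf.prob (cond_oracle p v) (v - c) = measure_pmf.prob (cond_oracle p v) v - measure_pmf.prob (cond_oracle p v) c"
    using assms by (intro measure_pmf.finite_measure_Diff) auto
  also have "measure_pmf.prob (cond_oracle p v) v = 1"
    using set_CO[OF assms(1,2), of p] by (auto simp: measure_pmf.prob_eq_1 AE_measure_pmf_iff)
  finally show ?thesis .
qed

definition NN :: "nat \<Rightarrow> nat \<Rightarrow> nat \<Rightarrow> nat \<Rightarrow> nat set" where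
  "NN n d t y = {z \<in> {1..n}. (z - 1) div 2 ^ (d - t) = (y - 1) div 2 ^ (d - t)}"

lemma N_fin: "finite (NN n d t y)" and N_sub: "NN n d t y \<subseteq> {1..n}"
  by (auto simp: NN_def)

lemma N_mem: "y \<in> {1..n} \<Longrightarrow> y \<in> NN n d t y"
  by (auto simp: NN_def)

lemma N_ne: "y \<in> {1..n} \<Longrightarrow> NN n d t y \<noteq> {}"
  using N_mem by blast

lemma N_sym: "z \<in> NN n d t y \<Longrightarrow> NN n d t z = NN n d t y"
  by (auto simp: NN_def)

lemma N_sym': "z \<in> NN n d t y \<longleftrightarrow> (y \<in> NN n d t z \<and> z \<in> {1..n} \<and> y \<in> {1..n}) \<or> (z \<in> NN n d t y \<and> y \<notin> {1..n})"
  by (auto simp: NN_def)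

lemma N_0:
  assumes "n \<le> 2 ^ d" "y \<in> {1..n}"
  shows "NN n d 0 y = {1..n}"
proof -
  have "(z - 1) div 2 ^ d = 0" if "z \<in> {1..n}" for z
    using that assms by (intro div_less) auto
  then show ?thesis using assms by (auto simp: NN_def)
qed

lemma N_d:
  assumes "y \<in> {1..n}"
  shows "NN n d d y = {y}"
  using assms by (auto simp: NN_def)

lemma div_Suc_pow: "(a::nat) div 2 ^ (d - t) = a div 2 ^ (d - Suc t) div 2" if "t < d"
proof -
  have "d - t = Suc (d - Suc t)" using that by simp
  then show ?thesis by (simp add: div_mult2_eq[symmetric] mult.commute)
qed

lemma N_mono:
  assumes "t < d"
  shows "NN n d (Suc t) y \<subseteq> NN n d t y"
proof
  fix z assume z: "z \<in> NN n d (Suc t) y"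
  have e: "(z - 1) div 2 ^ (d - Suc t) = (y - 1) div 2 ^ (d - Suc t)" "z \<in> {1..n}"
    using z unfolding NN_def by auto
  have "(z - 1) div 2 ^ (d - t) = (y - 1) div 2 ^ (d - t)"
    unfolding div_Suc_pow[OF assms, of "z - 1"] div_Suc_pow[OF assms, of "y - 1"] e(1) ..
  thus "z \<in> NN n d t y" using e(2) unfolding NN_def by blast
qed

lemma N_other:
  assumes "t < d" "z \<in> NN n d t x - NN n d (Suc t) x"
  shows "NN n d (Suc t) z = NN n d t x - NN n d (Suc t) x"
proof -
  let ?K = "2 ^ (d - Suc t) :: nat"
  have D: "a div 2 ^ (d - t) = a div ?K div 2" for a by (rule div_Suc_pow[OF assms(1)])
  have z0: "z \<in> {1..n}" "(z - 1) div 2 ^ (d - t) = (x - 1) div 2 ^ (d - t)" "(z - 1) div ?K \<noteq> (x - 1) div ?K"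
    using assms(2) unfolding NN_def by auto
  have z2: "(z - 1) div ?K div 2 = (x - 1) div ?K div 2" using z0(2) unfolding D .
  have key: "A = Z \<longleftrightarrow> (A div 2 = X div 2 \<and> A \<noteq> X)" if h: "Z div 2 = X div 2" "Z \<noteq> X" for A Z X :: nat
  proof
    assume "A = Z" thus "A div 2 = X div 2 \<and> A \<noteq> X" using h by simp
  next
    assume a: "A div 2 = X div 2 \<and> A \<noteq> X"
    have dA: "A = A div 2 * 2 + A mod 2" and dZ: "Z = Z div 2 * 2 + Z mod 2" and dX: "X = X div 2 * 2 + X mod 2"
      by simp_all
    have m: "A mod 2 < 2" "Z mod 2 < 2" "X mod 2 < 2" by simp_all
    have "A mod 2 \<noteq> X mod 2" using a dA dX by metis
    moreover have "Z mod 2 \<noteq> X mod 2" using h dZ dX by metis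
    ultimately have "A mod 2 = Z mod 2" using m by linarith
    thus "A = Z" using dA dZ a h by metis
  qed
  show ?thesis
  proof (intro set_eqI iffI)
    fix w assume w: "w \<in> NN n d (Suc t) z"
    hence w1: "w \<in> {1..n}" "(w - 1) div ?K = (z - 1) div ?K" unfolding NN_def by auto
    hence "(w - 1) div ?K div 2 = (x - 1) div ?K div 2 \<and> (w - 1) div ?K \<noteq> (x - 1) div ?K"
      using key[OF z2 z0(3)] by blast
    thus "w \<in> NN n d t x - NN n d (Suc t) x" using w1(1) unfolding NN_def D by auto
  next
    fix w assume w: "w \<in> NN n d t x - NN n d (Suc t) x"
    hence w1: "w \<in> {1..n}" "(w - 1) div ?K div 2 = (x - 1) div ?K div 2" "(w - 1) div ?K \<noteq> (x - 1) div ?K"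
      unfolding NN_def D by auto
    hence "(w - 1) div ?K = (z - 1) div ?K" using key[OF z2 z0(3)] by blast
    thus "w \<in> NN n d (Suc t) z" using w1(1) unfolding NN_def by auto
  qed
qed

lemma telescope_abs:
  fixes f :: "nat \<Rightarrow> real"
  shows "\<bar>f 0 - f d\<bar> \<le> (\<Sum>t<d. \<bar>f t - f (Suc t)\<bar>)"
proof (induction d)
  case 0
  then show ?case by simp
next
  case (Suc d)
  have "\<bar>f 0 - f (Suc d)\<bar> \<le> \<bar>f 0 - f d\<bar> + \<bar>f d - f (Suc d)\<bar>" by linarith
  then show ?case using Suc by simp
qed

lemma dist_full:
  assumes "is_dist_on n p"
  shows "measure_pmf.prob p {1..n} = 1"
  using assms by (auto simp: is_dist_on_def measure_pmf.prob_eq_1 AE_measure_pmf_iff)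

lemma per_y:
  assumes p: "is_dist_on n p" and q: "is_dist_on n q" and nd: "n \<le> 2 ^ d" and y: "y \<in> {1..n}"
  shows "\<bar>pmf p y - pmf q y\<bar> \<le> (\<Sum>t<d. measure_pmf.prob q (NN n d t y) * pmf (cond_oracle p (NN n d (Suc t) y)) y *
      \<bar>measure_pmf.prob (cond_oracle p (NN n d t y)) (NN n d (Suc t) y) - measure_pmf.prob (cond_oracle q (NN n d t y)) (NN n d (Suc t) y)\<bar>)"
proof -
  define H where "H t = measure_pmf.prob q (NN n d t y) * pmf (cond_oracle p (NN n d t y)) y" for t
  have H0: "H 0 = pmf p y"
    using dist_full[OF p] dist_full[OF q] y by (simp add: H_def N_0[OF nd y] pmf_CO)
  have Hd: "H d = pmf q y"
  proof (cases "pmf p y = 0")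
    case True
    then show ?thesis using y by (simp add: H_def N_d pmf_CO measure_pmf_single)
  next
    case False
    then show ?thesis using y by (simp add: H_def N_d pmf_CO measure_pmf_single)
  qed
  have step: "\<bar>H t - H (Suc t)\<bar> = measure_pmf.prob q (NN n d t y) * pmf (cond_oracle p (NN n d (Suc t) y)) y *
      \<bar>measure_pmf.prob (cond_oracle p (NN n d t y)) (NN n d (Suc t) y) - measure_pmf.prob (cond_oracle q (NN n d t y)) (NN n d (Suc t) y)\<bar>"
    if t: "t < d" for t
  proof -
    let ?v = "NN n d t y" and ?c = "NN n d (Suc t) y"
    have cv: "?c \<subseteq> ?v" by (rule N_mono[OF t])
    have yc: "y \<in> ?c" by (rule N_mem[OF y])
    have h1: "H t = measure_pmf.prob q ?v * (measure_pmf.prob (cond_oracle p ?v) ?c * pmf (cond_oracle p ?c) y)"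
      unfolding H_def using CO_consistent[OF N_fin cv yc] by simp
    have h2: "H (Suc t) = measure_pmf.prob q ?v * measure_pmf.prob (cond_oracle q ?v) ?c * pmf (cond_oracle p ?c) y"
      unfolding H_def using CO_mass[OF N_fin cv, of q] yc by auto
    have "H t - H (Suc t) = measure_pmf.prob q ?v * pmf (cond_oracle p ?c) y *
       (measure_pmf.prob (cond_oracle p ?v) ?c - measure_pmf.prob (cond_oracle q ?v) ?c)"
      unfolding h1 h2 by (simp add: algebra_simps)
    then show ?thesis by (simp add: abs_mult)
  qed
  have "\<bar>pmf p y - pmf q y\<bar> \<le> (\<Sum>t<d. \<bar>H t - H (Suc t)\<bar>)"
    using telescope_abs[of H d] H0 Hd by simp
  also have "\<dots> = (\<Sum>t<d. measure_pmf.prob q (NN n d t y) * pmf (cond_oracle p (NN n d (Suc t) y)) y *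
      \<bar>measure_pmf.prob (cond_oracle p (NN n d t y)) (NN n d (Suc t) y) - measure_pmf.prob (cond_oracle q (NN n d t y)) (NN n d (Suc t) y)\<bar>)"
    by (intro sum.cong refl step) auto
  finally show ?thesis .
qed





definition del :: "nat \<Rightarrow> nat \<Rightarrow> nat pmf \<Rightarrow> nat pmf \<Rightarrow> nat \<Rightarrow> nat \<Rightarrow> real" where
  "del n d p q t x = \<bar>measure_pmf.prob (cond_oracle p (NN n d t x)) (NN n d (Suc t) x)
      - measure_pmf.prob (cond_oracle q (NN n d t x)) (NN n d (Suc t) x)\<bar>"

lemma del_same:
  assumes t: "t < d" and x: "x \<in> {1..n}" and y: "y \<in> NN n d t x"
  shows "del n d p q t y = del n d p q t x"
proof (cases "y \<in> NN n d (Suc t) x")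
  case True
  then show ?thesis using y by (simp add: del_def N_sym)
next
  case False
  have e1: "NN n d t y = NN n d t x" using y by (rule N_sym)
  have e2: "NN n d (Suc t) y = NN n d t x - NN n d (Suc t) x" using N_other[OF t] y False by blast
  have ne: "NN n d t x \<noteq> {}" using N_ne[OF x] .
  show ?thesis
    unfolding del_def e1 e2 CO_compl[OF N_fin ne N_mono[OF t]] by linarith
qed

lemma inner_le2:
  assumes t: "t < d" and x: "x \<in> {1..n}"
  shows "(\<Sum>y\<in>NN n d t x. pmf (cond_oracle p (NN n d (Suc t) y)) y) \<le> 2"
proof -
  let ?v = "NN n d t x" and ?c = "NN n d (Suc t) x"
  let ?r = "?v - ?c"
  have cv: "?c \<subseteq> ?v" by (rule N_mono[OF t])
  have "(\<Sum>y\<in>?v. pmf (cond_oracle p (NN n d (Suc t) y)) y)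
      = (\<Sum>y\<in>?c. pmf (cond_oracle p (NN n d (Suc t) y)) y) + (\<Sum>y\<in>?r. pmf (cond_oracle p (NN n d (Suc t) y)) y)"
    by (simp only: sum.subset_diff[OF cv N_fin] add.commute)
  also have "(\<Sum>y\<in>?c. pmf (cond_oracle p (NN n d (Suc t) y)) y) = (\<Sum>y\<in>?c. pmf (cond_oracle p ?c) y)"
    by (intro sum.cong refl) (metis N_sym)
  also have "\<dots> = measure_pmf.prob (cond_oracle p ?c) ?c"
    by (simp add: measure_measure_pmf_finite[OF N_fin])
  also have "(\<Sum>y\<in>?r. pmf (cond_oracle p (NN n d (Suc t) y)) y) = (\<Sum>y\<in>?r. pmf (cond_oracle p ?r) y)"
    by (intro sum.cong refl) (metis N_other[OF t])
  also have "\<dots> = measure_pmf.prob (cond_oracle p ?r) ?r"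
    by (rule measure_measure_pmf_finite[symmetric]) (simp add: N_fin)
  finally show ?thesis
    using measure_pmf.prob_le_1[of "cond_oracle p ?c" ?c] measure_pmf.prob_le_1[of "cond_oracle p ?r" ?r] by linarith
qed

lemma level_bound:
  assumes q: "is_dist_on n q" and t: "t < d"
  shows "(\<Sum>y\<in>{1..n}. measure_pmf.prob q (NN n d t y) * pmf (cond_oracle p (NN n d (Suc t) y)) y * del n d p q t y)
     \<le> 2 * (\<Sum>x\<in>{1..n}. pmf q x * del n d p q t x)"
proof -
  let ?P = "\<lambda>y. pmf (cond_oracle p (NN n d (Suc t) y)) y"
  have "(\<Sum>y\<in>{1..n}. measure_pmf.prob q (NN n d t y) * ?P y * del n d p q t y)
      = (\<Sum>y\<in>{1..n}. \<Sum>x\<in>{1..n}. if x \<in> NN n d t y then pmf q x * del n d p q t x * ?P y else 0)"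
  proof (intro sum.cong refl)
    fix y assume y: "y \<in> {1..n}"
    have "measure_pmf.prob q (NN n d t y) * ?P y * del n d p q t y = (\<Sum>x\<in>NN n d t y. pmf q x * del n d p q t x * ?P y)"
      unfolding measure_measure_pmf_finite[OF N_fin] sum_distrib_right
      by (intro sum.cong refl) (simp add: del_same[OF t y])
    also have "\<dots> = (\<Sum>x\<in>{1..n}. if x \<in> NN n d t y then pmf q x * del n d p q t x * ?P y else 0)"
      using N_sub by (simp add: sum.inter_restrict[symmetric] Int_absorb1)
    finally show "measure_pmf.prob q (NN n d t y) * ?P y * del n d p q t y = \<dots>" .
  qed
  also have "\<dots> = (\<Sum>x\<in>{1..n}. \<Sum>y\<in>{1..n}. if x \<in> NN n d t y then pmf q x * del n d p q t x * ?P y else 0)"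
    by (rule sum.swap)
  also have "\<dots> = (\<Sum>x\<in>{1..n}. pmf q x * del n d p q t x * (\<Sum>y\<in>NN n d t x. ?P y))"
  proof (intro sum.cong refl)
    fix x assume x: "x \<in> {1..n}"
    have "(\<Sum>y\<in>{1..n}. if x \<in> NN n d t y then pmf q x * del n d p q t x * ?P y else 0)
        = (\<Sum>y\<in>{1..n}. if y \<in> NN n d t x then pmf q x * del n d p q t x * ?P y else 0)"
      using x by (intro sum.cong refl) (auto simp: NN_def)
    also have "\<dots> = (\<Sum>y\<in>NN n d t x. pmf q x * del n d p q t x * ?P y)"
      using N_sub by (simp add: sum.inter_restrict[symmetric] Int_absorb1 Int_commute)
    finally show "(\<Sum>y\<in>{1..n}. if x \<in> NN n d t y then pmf q x * del n d p q t x * ?P y else 0) = pmf q x * del n d p q t x * (\<Sum>y\<in>NN n d t x. ?P y)"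
      by (simp add: sum_distrib_left)
  qed
  also have "\<dots> \<le> (\<Sum>x\<in>{1..n}. pmf q x * del n d p q t x * 2)"
    by (intro sum_mono mult_left_mono inner_le2[OF t]) (auto simp: del_def)
  finally show ?thesis by (simp add: sum_distrib_left mult.commute)
qed

lemma dTV_bound:
  assumes p: "is_dist_on n p" and q: "is_dist_on n q" and nd: "n \<le> 2 ^ d"
  shows "dTV n p q \<le> (\<Sum>t<d. \<Sum>x\<in>{1..n}. pmf q x * del n d p q t x)"
proof -
  have "(\<Sum>y\<in>{1..n}. \<bar>pmf p y - pmf q y\<bar>) \<le> (\<Sum>y\<in>{1..n}. \<Sum>t<d. measure_pmf.prob q (NN n d t y) * pmf (cond_oracle p (NN n d (Suc t) y)) y * del n d p q t y)"
    by (intro sum_mono) (use per_y[OF p q nd] in \<open>simp add: del_def\<close>)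
  also have "\<dots> = (\<Sum>t<d. \<Sum>y\<in>{1..n}. measure_pmf.prob q (NN n d t y) * pmf (cond_oracle p (NN n d (Suc t) y)) y * del n d p q t y)"
    by (rule sum.swap)
  also have "\<dots> \<le> (\<Sum>t<d. 2 * (\<Sum>x\<in>{1..n}. pmf q x * del n d p q t x))"
    by (intro sum_mono level_bound[OF q]) auto
  finally show ?thesis by (simp add: dTV_def sum_distrib_left[symmetric])
qed

lemma bucket_pointwise:
  fixes x :: real
  assumes "0 \<le> x" "x \<le> 1"
  shows "x \<le> 1 / 2 ^ J + (\<Sum>j\<in>{1..J}. 2 / 2 ^ j * (if x \<ge> 1 / 2 ^ j then 1 else 0))"
proof (induction J)
  case 0
  then show ?case using assms by simp
next
  case (Suc J)
  have nn: "0 \<le> (\<Sum>j\<in>{1..J}. 2 / 2 ^ j * (if x \<ge> 1 / 2 ^ j then 1 else 0 :: real))"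
    by (intro sum_nonneg) auto
  show ?case
  proof (cases "x \<ge> 1 / 2 ^ Suc J")
    case True
    then show ?thesis using Suc by (simp add: field_simps)
  next
    case False
    then show ?thesis using nn by simp
  qed
qed

lemma bucket:
  fixes \<omega> \<delta> :: "'a \<Rightarrow> real"
  assumes fin: "finite A" and w0: "\<And>a. a \<in> A \<Longrightarrow> 0 \<le> \<omega> a" and w1: "(\<Sum>a\<in>A. \<omega> a) = 1"
    and d01: "\<And>a. a \<in> A \<Longrightarrow> 0 \<le> \<delta> a \<and> \<delta> a \<le> 1"
    and mu: "\<mu> \<le> (\<Sum>a\<in>A. \<omega> a * \<delta> a)" and J: "J \<ge> 1" and JJ: "1 / 2 ^ J \<le> \<mu> / 4"
  shows "\<exists>j\<in>{1..J}. (\<Sum>a\<in>A. \<omega> a * (if \<delta> a \<ge> 1 / 2 ^ j then 1 else 0)) \<ge> 3 * 2 ^ j * \<mu> / (8 * J)"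
proof (rule ccontr)
  define w where "w j = (\<Sum>a\<in>A. \<omega> a * (if \<delta> a \<ge> 1 / 2 ^ j then 1 else 0))" for j :: nat
  assume "\<not> ?thesis"
  hence small: "2 / 2 ^ j * w j < 3 * \<mu> / (4 * J)" if "j \<in> {1..J}" for j
    using that by (auto simp: w_def field_simps not_le)
  have "\<mu> \<le> (\<Sum>a\<in>A. \<omega> a * (1 / 2 ^ J + (\<Sum>j\<in>{1..J}. 2 / 2 ^ j * (if \<delta> a \<ge> 1 / 2 ^ j then 1 else 0))))"
    using mu by (rule order.trans) (intro sum_mono mult_left_mono bucket_pointwise, auto dest: d01 w0)
  also have "\<dots> = 1 / 2 ^ J + (\<Sum>j\<in>{1..J}. 2 / 2 ^ j * w j)"
  proof -
    have "(\<Sum>a\<in>A. \<omega> a * (1 / 2 ^ J + (\<Sum>j\<in>{1..J}. 2 / 2 ^ j * (if \<delta> a \<ge> 1 / 2 ^ j then 1 else 0))))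
       = (\<Sum>a\<in>A. \<omega> a) / 2 ^ J + (\<Sum>a\<in>A. \<Sum>j\<in>{1..J}. 2 / 2 ^ j * (\<omega> a * (if \<delta> a \<ge> 1 / 2 ^ j then 1 else 0)))"
      by (simp add: distrib_left sum.distrib sum_divide_distrib sum_distrib_left mult.left_commute)
    also have "\<dots> = 1 / 2 ^ J + (\<Sum>j\<in>{1..J}. 2 / 2 ^ j * w j)"
      by (simp add: w1 w_def sum_distrib_left) (rule sum.swap)
    finally show ?thesis .
  qed
  also have "(\<Sum>j\<in>{1..J}. 2 / 2 ^ j * w j) < (\<Sum>j\<in>{1..J}. 3 * \<mu> / (4 * J))"
    using J by (intro sum_strict_mono small) auto
  also have "(\<Sum>j\<in>{1..J}. 3 * \<mu> / (4 * J)) = 3 * \<mu> / 4"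
    using J by simp
  finally show False using JJ by linarith
qed




definition dd :: "nat \<Rightarrow> nat" where "dd n = nat \<lceil>log 2 (real n)\<rceil> + 1"
definition mu :: "nat \<Rightarrow> real \<Rightarrow> real" where "mu n eps = eps / real (dd n)"
definition JJ :: "nat \<Rightarrow> real \<Rightarrow> nat" where "JJ n eps = nat \<lceil>log 2 (4 / mu n eps)\<rceil>"
definition mm :: "nat \<Rightarrow> real \<Rightarrow> nat \<Rightarrow> nat" where
  "mm n eps j = nat \<lceil>8 * real (JJ n eps) / (2 ^ j * mu n eps)\<rceil>"
definition M0 :: "nat \<Rightarrow> real \<Rightarrow> nat" where
  "M0 n eps = JJ n eps * nat \<lceil>8 * real (JJ n eps) / mu n eps\<rceil>"
definition kk :: "nat \<Rightarrow> real \<Rightarrow> nat \<Rightarrow> nat" where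
  "kk n eps j = nat \<lceil>2 * 4 ^ j * ln (6 * real (M0 n eps))\<rceil>"
definition rr :: "nat \<Rightarrow> real" where "rr j = 1 / 2 ^ Suc j"

lemma nat_ceil: "x \<le> real (nat \<lceil>x\<rceil>)" "x \<ge> 0 \<Longrightarrow> real (nat \<lceil>x\<rceil>) < x + 1"
proof -
  show "x \<le> real (nat \<lceil>x\<rceil>)"
    by (metis of_int_ceiling_le_add_one le_of_int_ceiling of_nat_nat order.trans nat_le_0 ceiling_le_zero of_nat_0 nle_le)
  show "x \<ge> 0 \<Longrightarrow> real (nat \<lceil>x\<rceil>) < x + 1"
    by (simp add: of_nat_nat) linarith
qed

lemma pow2_powr: "(2::real) ^ k = 2 powr real k"
  by (simp add: powr_realpow)

lemma dd_facts:
  assumes "n \<ge> 1"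
  shows "n \<le> 2 ^ dd n" "dd n \<ge> 1" "real (dd n) \<le> log 2 (real n) + 2"
proof -
  have l0: "log 2 (real n) \<ge> 0" using assms by simp
  have "real n = 2 powr log 2 (real n)" using assms by simp
  also have "\<dots> \<le> 2 powr real (nat \<lceil>log 2 (real n)\<rceil>)"
    using nat_ceil(1) by (intro powr_mono) auto
  also have "\<dots> = 2 ^ nat \<lceil>log 2 (real n)\<rceil>" by (simp add: pow2_powr)
  finally have a: "real n \<le> 2 ^ nat \<lceil>log 2 (real n)\<rceil>" .
  have pw: "(2::real) ^ k \<le> 2 ^ (k + 1)" for k :: nat by simp
  have b: "(2::real) ^ nat \<lceil>log 2 (real n)\<rceil> \<le> 2 ^ dd n" unfolding dd_def by (rule pw)
  have "real n \<le> (2::real) ^ dd n" using a b by linarith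
  then show "n \<le> 2 ^ dd n" by (metis of_nat_le_iff of_nat_numeral of_nat_power)
  show "dd n \<ge> 1" by (simp add: dd_def)
  show "real (dd n) \<le> log 2 (real n) + 2" unfolding dd_def using nat_ceil(2)[OF l0] by simp
qed

context
  fixes n :: nat and eps :: real
  assumes n: "n \<ge> 1" and eps: "0 < eps" "eps \<le> 1"
begin

lemma mu_facts: "0 < mu n eps" "mu n eps \<le> 1"
  using dd_facts(2)[OF n] eps by (auto simp: mu_def field_simps)

lemma JJ_facts: "JJ n eps \<ge> 2" "1 / 2 ^ JJ n eps \<le> mu n eps / 4" "2 ^ JJ n eps \<le> 8 / mu n eps"
proof -
  have m: "0 < mu n eps" "mu n eps \<le> 1" by (rule mu_facts)+
  have g4: "4 / mu n eps \<ge> 4" using m by (simp add: field_simps)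
  have lg: "log 2 (4 / mu n eps) \<ge> 2"
  proof -
    have "log 2 (4 / mu n eps) \<ge> log 2 4" using g4 m by (subst log_le_cancel_iff) auto
    moreover have "log 2 (4::real) = 2"
    proof -
      have "log 2 ((2::real) ^ 2) = real (2::nat)" by (rule log_pow_cancel) auto
      thus ?thesis by simp
    qed
    ultimately show ?thesis by simp
  qed
  show "JJ n eps \<ge> 2" unfolding JJ_def using lg nat_ceil(1)[of "log 2 (4 / mu n eps)"] by linarith
  have "4 / mu n eps = 2 powr log 2 (4 / mu n eps)" using m by simp
  also have "\<dots> \<le> 2 powr real (JJ n eps)"
    unfolding JJ_def using nat_ceil(1) by (intro powr_mono) auto
  finally have a: "4 / mu n eps \<le> 2 ^ JJ n eps" by (simp add: pow2_powr)
  thus "1 / 2 ^ JJ n eps \<le> mu n eps / 4" using m by (simp add: field_simps)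
  have "2 powr real (JJ n eps) \<le> 2 powr (log 2 (4 / mu n eps) + 1)"
    unfolding JJ_def using lg nat_ceil(2)[of "log 2 (4 / mu n eps)"] by (intro powr_mono) auto
  also have "\<dots> = 2 powr log 2 (4 / mu n eps) * 2 powr 1" by (rule powr_add)
  also have "\<dots> = 8 / mu n eps" using m by simp
  finally show "2 ^ JJ n eps \<le> 8 / mu n eps" by (simp add: pow2_powr)
qed

lemma mm_ge: "real (mm n eps j) \<ge> 8 * real (JJ n eps) / (2 ^ j * mu n eps)"
  unfolding mm_def by (rule nat_ceil(1))

lemma mm_le: "mm n eps j \<le> nat \<lceil>8 * real (JJ n eps) / mu n eps\<rceil>"
proof -
  have m: "0 < mu n eps" by (rule mu_facts)
  have "8 * real (JJ n eps) / (2 ^ j * mu n eps) \<le> 8 * real (JJ n eps) / mu n eps"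
    using m by (intro divide_left_mono) auto
  thus ?thesis unfolding mm_def by (intro nat_mono ceiling_mono)
qed

lemma M0_facts: "M0 n eps \<ge> 1" "(\<Sum>j\<in>{1..JJ n eps}. mm n eps j) \<le> M0 n eps"
proof -
  have m: "0 < mu n eps" by (rule mu_facts)
  have "8 * real (JJ n eps) / mu n eps > 0" using m JJ_facts(1) by auto
  hence "nat \<lceil>8 * real (JJ n eps) / mu n eps\<rceil> \<ge> 1" by linarith
  thus "M0 n eps \<ge> 1" using JJ_facts(1) by (simp add: M0_def)
  have "(\<Sum>j\<in>{1..JJ n eps}. mm n eps j) \<le> (\<Sum>j\<in>{1..JJ n eps}. nat \<lceil>8 * real (JJ n eps) / mu n eps\<rceil>)"
    by (intro sum_mono mm_le)
  thus "(\<Sum>j\<in>{1..JJ n eps}. mm n eps j) \<le> M0 n eps" by (simp add: M0_def)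
qed

lemma kk_facts: "real (kk n eps j) \<ge> 2 * 4 ^ j * ln (6 * real (M0 n eps))" "kk n eps j \<ge> 1"
proof -
  have "ln (6 * real (M0 n eps)) > 0" using M0_facts(1) by simp
  hence "2 * 4 ^ j * ln (6 * real (M0 n eps)) > 0" by simp
  thus "real (kk n eps j) \<ge> 2 * 4 ^ j * ln (6 * real (M0 n eps))" "kk n eps j \<ge> 1"
    unfolding kk_def using nat_ceil(1)[of "2 * 4 ^ j * ln (6 * real (M0 n eps))"] by linarith+
qed

lemma hoeff_param: "2 * exp (-2 * real (kk n eps j) * (rr j)\<^sup>2) \<le> 1 / (3 * real (M0 n eps))"
proof -
  have M: "real (M0 n eps) \<ge> 1" using M0_facts(1) by simp
  have "2 * real (kk n eps j) * (rr j)\<^sup>2 \<ge> 2 * (2 * 4 ^ j * ln (6 * real (M0 n eps))) * (rr j)\<^sup>2"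
    using kk_facts(1)[of j] by (intro mult_right_mono) auto
  also have "2 * (2 * 4 ^ j * ln (6 * real (M0 n eps))) * (rr j)\<^sup>2 = ln (6 * real (M0 n eps))"
    by (simp add: rr_def power2_eq_square field_simps power_mult_distrib[symmetric])
  finally have "-2 * real (kk n eps j) * (rr j)\<^sup>2 \<le> - ln (6 * real (M0 n eps))" by simp
  hence "exp (-2 * real (kk n eps j) * (rr j)\<^sup>2) \<le> exp (- ln (6 * real (M0 n eps)))" by simp
  also have "\<dots> = 1 / (6 * real (M0 n eps))" using M by (simp add: exp_minus inverse_eq_divide)
  finally show ?thesis by simp
qed

lemma ln2_ge: "ln (2::real) \<ge> 1 / 2"
proof -
  have "exp (1/2::real) ^ 2 = exp 1" by (simp add: exp_of_nat_mult[symmetric] power2_eq_square exp_add[symmetric])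
  hence "exp (1/2::real) ^ 2 \<le> 2 ^ 2" using exp_le by simp
  hence "exp (1/2::real) \<le> 2" by (rule power2_le_imp_le) simp
  hence "ln (exp (1/2::real)) \<le> ln 2" by (subst ln_le_cancel_iff) auto
  thus ?thesis by simp
qed

lemma cost_bound:
  "(\<Sum>j\<in>{1..JJ n eps}. real (mm n eps j) * real (kk n eps j)) \<le> query_bound (2 * 10^8) 3 n eps"
proof -
  define J where "J = JJ n eps"
  define m where "m = mu n eps"
  define lam where "lam = ln (6 * real (M0 n eps))"
  define l where "l = log 2 (real n + 1)"
  define L where "L = l ^ 2 / eps ^ 2"
  define Lam where "Lam = 1 + ln (1 + L)"
  have m: "0 < m" "m \<le> 1" using mu_facts by (auto simp: m_def)
  have J2: "J \<ge> 2" "1 / 2 ^ J \<le> m / 4" "2 ^ J \<le> 8 / m" using JJ_facts by (auto simp: J_def m_def)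
  have M1: "real (M0 n eps) \<ge> 1" using M0_facts(1) by simp
  have lam1: "lam \<ge> 1"
  proof -
    have "exp 1 \<le> 6 * real (M0 n eps)" using exp_le M1 by linarith
    hence "ln (exp 1) \<le> ln (6 * real (M0 n eps))" using M1 by (subst ln_le_cancel_iff) auto
    thus ?thesis by (simp add: lam_def)
  qed
  have A: "real (mm n eps j) * real (kk n eps j) \<le> 384 * J * lam / m ^ 2" if j: "j \<in> {1..J}" for j
  proof -
    have pj: "(2::real) ^ j \<le> 2 ^ J" using j by (intro power_increasing) auto
    have pj0: "(2::real) ^ j > 0" by simp
    define x where "x = 8 * real J / (2 ^ j * m)"
    have x1: "x \<ge> 1"
    proof -
      have a1: "2 ^ j * m \<le> 2 ^ J * m" by (rule mult_right_mono[OF pj]) (use m in simp)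
      have a2: "2 ^ J * m \<le> 8" using J2(3) m by (simp add: le_divide_eq)
      have "2 ^ j * m \<le> 8" using a1 a2 by linarith
      hence "8 * real J / (2 ^ j * m) \<ge> real J" using m J2(1) by (simp add: field_simps)
      thus ?thesis using J2(1) by (simp add: x_def)
    qed
    have mmx: "real (mm n eps j) \<le> 2 * x"
    proof -
      have "real (mm n eps j) < x + 1" unfolding mm_def x_def J_def m_def
        by (rule nat_ceil(2)) (use x1 in \<open>simp add: x_def J_def m_def\<close>)
      thus ?thesis using x1 by linarith
    qed
    have kkb: "real (kk n eps j) \<le> 3 * 4 ^ j * lam"
    proof -
      have "real (kk n eps j) < 2 * 4 ^ j * lam + 1" unfolding kk_def lam_def
        by (rule nat_ceil(2)) (use lam1 in \<open>simp add: lam_def\<close>)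
      moreover have "1 \<le> 4 ^ j * lam" using lam1 by (metis mult_le_cancel_left1 not_less one_le_power order.trans
        mult_1_right numeral_le_iff semiring_norm(68) semiring_norm(69) one_le_numeral mult.commute)
      ultimately show ?thesis by linarith
    qed
    have "real (mm n eps j) * real (kk n eps j) \<le> (2 * x) * (3 * 4 ^ j * lam)"
      using mmx kkb by (intro mult_mono) auto
    also have "\<dots> = 48 * J * lam * 2 ^ j / m"
      using m by (simp add: x_def field_simps power_mult_distrib[symmetric])
    also have "\<dots> \<le> 48 * J * lam * (8 / m) / m"
      using order.trans[OF pj J2(3)] m lam1 by (intro divide_right_mono mult_left_mono) auto
    also have "\<dots> = 384 * J * lam / m ^ 2" by (simp add: power2_eq_square)
    finally show ?thesis .
  qed
  have S: "(\<Sum>j\<in>{1..J}. real (mm n eps j) * real (kk n eps j)) \<le> 384 * J ^ 2 * lam / m ^ 2"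
  proof -
    have "(\<Sum>j\<in>{1..J}. real (mm n eps j) * real (kk n eps j)) \<le> (\<Sum>j\<in>{1..J}. 384 * J * lam / m ^ 2)"
      by (intro sum_mono A)
    thus ?thesis by (simp add: power2_eq_square mult_ac)
  qed
  have l1: "l \<ge> 1" unfolding l_def using n by simp
  have dl: "real (dd n) \<le> 3 * l"
  proof -
    have "log 2 (real n) \<le> l" unfolding l_def using n by simp
    thus ?thesis using dd_facts(3)[OF n] l1 by linarith
  qed
  have im: "1 / m \<le> 3 * l / eps" using dl eps by (simp add: m_def mu_def divide_right_mono)
  have L0: "L \<ge> 0" by (simp add: L_def)
  have Lam1: "Lam \<ge> 1" using L0 by (simp add: Lam_def)
  have le_eps: "l / eps \<le> 1 + L"
  proof -
    define x where "x = l / eps"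
    have h: "0 \<le> (x - 1/2)^2" by simp
    have h2: "(x - 1/2)^2 = x^2 - x + 1/4" by (simp add: power2_eq_square algebra_simps)
    have "x \<le> 1 + x ^ 2" using h h2 by linarith
    thus ?thesis by (simp add: x_def L_def power_divide)
  qed
  have im2: "1 / m ^ 2 \<le> 9 * L"
  proof -
    have "1 / m ^ 2 = (1 / m) ^ 2" by (simp add: power_divide)
    also have "\<dots> \<le> (3 * l / eps) ^ 2" using im m by (intro power_mono) auto
    also have "\<dots> = 9 * L" by (simp add: L_def power_divide power_mult_distrib)
    finally show ?thesis .
  qed
  have im3: "1 / m \<le> 3 * (1 + L)"
  proof -
    have "3 * l / eps = 3 * (l / eps)" by simp
    also have "\<dots> \<le> 3 * (1 + L)" using le_eps by simp
    finally show ?thesis using im by simp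
  qed
  have lnim: "ln (1 / m) \<le> 2 + ln (1 + L)"
  proof -
    have "ln (1 / m) \<le> ln (3 * (1 + L))" using im3 m L0 by (subst ln_le_cancel_iff) auto
    also have "\<dots> = ln 3 + ln (1 + L)" using L0 by (intro ln_mult_pos) auto
    also have "ln (3::real) \<le> 2" using ln_le_minus_one[of 3] by simp
    finally show ?thesis by simp
  qed
  have lnim0: "ln (1 / m) \<ge> 0" using m by simp
  have JL: "real J \<le> 11 * Lam"
  proof -
    define X where "X = ln (4 / m)"
    have X: "X = ln 4 + ln (1 / m)" using m by (simp add: X_def ln_div)
    have l4: "ln (4::real) \<le> 3" using ln_le_minus_one[of 4] by simp
    have l40: "ln (4::real) \<ge> 0" by simp
    have X0: "X \<ge> 0" using X l40 lnim0 by linarith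
    have XL: "X \<le> 4 + Lam" using X l4 lnim by (simp add: Lam_def)
    have "real J < log 2 (4 / m) + 1" unfolding J_def JJ_def m_def
      by (rule nat_ceil(2)) (use m in \<open>simp add: m_def\<close>)
    also have "log 2 (4 / m) = X / ln 2" by (simp add: log_def X_def)
    also have "X / ln 2 \<le> X / (1/2)" using ln2_ge X0 by (intro divide_left_mono) auto
    finally show ?thesis using XL Lam1 by simp
  qed
  have lamL: "lam \<le> 102 * Lam"
  proof -
    have J1: "real J \<ge> 1" using J2(1) by simp
    have c: "real (nat \<lceil>8 * real J / m\<rceil>) \<le> 9 * real J / m"
    proof -
      have pos: "8 * real J / m \<ge> 0" using m by simp
      have "1 / m \<le> real J / m" using J1 m by (simp add: divide_right_mono)
      moreover have "1 \<le> 1 / m" using m by simp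
      ultimately have "1 \<le> real J / m" by linarith
      thus ?thesis using nat_ceil(2)[OF pos] by simp
    qed
    have "real (M0 n eps) = real J * real (nat \<lceil>8 * real J / m\<rceil>)" by (simp add: M0_def J_def m_def)
    also have "\<dots> \<le> real J * (9 * real J / m)" using c by (intro mult_left_mono) auto
    finally have M: "6 * real (M0 n eps) \<le> 54 * (real J * real J) * (1 / m)" by simp
    have "lam \<le> ln (54 * (real J * real J) * (1 / m))"
      unfolding lam_def using M M1 by (subst ln_le_cancel_iff) auto
    also have "\<dots> = ln 54 + ln (real J) + ln (real J) + ln (1 / m)"
    proof -
      have p: "real J > 0" "1 / m > 0" using J1 m by auto
      have "ln (54 * (real J * real J) * (1 / m)) = ln (54 * (real J * real J)) + ln (1 / m)"
        using p by (intro ln_mult_pos) auto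
      also have "ln (54 * (real J * real J)) = ln 54 + ln (real J * real J)"
        using p by (intro ln_mult_pos) auto
      also have "ln (real J * real J) = ln (real J) + ln (real J)"
        using p by (intro ln_mult_pos) auto
      finally show ?thesis by simp
    qed
    also have "ln (54::real) \<le> 53" using ln_le_minus_one[of 54] by simp
    also have "ln (real J) \<le> real J" using ln_le_minus_one[of "real J"] J1 by simp
    finally have "lam \<le> 53 + 2 * real J + ln (1 / m)" by simp
    thus ?thesis using JL lnim Lam1 by (simp add: Lam_def)
  qed
  have QB: "query_bound (2 * 10^8) 3 n eps = 2 * 10^8 * L * Lam ^ 3"
    by (simp add: query_bound_def L_def Lam_def l_def Let_def)
  have "384 * real J ^ 2 * lam / m ^ 2 = 384 * real J ^ 2 * lam * (1 / m ^ 2)" by simp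
  also have "\<dots> \<le> 384 * (11 * Lam) ^ 2 * (102 * Lam) * (9 * L)"
    using JL lamL im2 lam1 m by (intro mult_mono power_mono) auto
  also have "\<dots> \<le> 2 * 10^8 * L * Lam ^ 3"
    using L0 Lam1 by (simp add: power2_eq_square power3_eq_cube mult_ac)
  finally show ?thesis using S QB by (simp add: J_def)
qed

end



lemma iid_support: "ts \<in> set_pmf (iid m D) \<Longrightarrow> length ts = m \<and> set ts \<subseteq> set_pmf D"
  by (induction m arbitrary: ts) fastforce+

lemma blk_support:
  assumes "ts \<in> set_pmf (blk m T J)"
  shows "(\<forall>t\<in>set ts. \<exists>j\<in>{1..J}. t \<in> set_pmf (T j))
       \<and> (\<forall>f F. (\<forall>j\<in>{1..J}. \<forall>t\<in>set_pmf (T j). f t \<le> F j) \<longrightarrow>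
            sum_list (map f ts) \<le> (\<Sum>j\<in>{1..J}. real (m j) * F j))"
  using assms
proof (induction J arbitrary: ts)
  case 0
  then show ?case by simp
next
  case (Suc J)
  from Suc.prems obtain a b where ab: "ts = a @ b" "a \<in> set_pmf (blk m T J)"
      "b \<in> set_pmf (iid (m (Suc J)) (T (Suc J)))" by auto
  note IH = Suc.IH[OF ab(2)]
  note bs = iid_support[OF ab(3)]
  show ?case
  proof (intro conjI allI impI)
    show "\<forall>t\<in>set ts. \<exists>j\<in>{1..Suc J}. t \<in> set_pmf (T j)"
      using IH bs ab(1) by fastforce
    fix f :: "'a \<Rightarrow> real" and F
    assume h: "\<forall>j\<in>{1..Suc J}. \<forall>t\<in>set_pmf (T j). f t \<le> F j"
    have "sum_list (map f a) \<le> (\<Sum>j\<in>{1..J}. real (m j) * F j)"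
      using IH h by auto
    moreover have "sum_list (map f b) \<le> sum_list (map (\<lambda>_. F (Suc J)) b)"
      using h bs by (intro sum_list_mono) auto
    moreover have "sum_list (map (\<lambda>_. F (Suc J)) b) = real (m (Suc J)) * F (Suc J)"
      using bs by (simp add: sum_list_triv)
    ultimately show "sum_list (map f ts) \<le> (\<Sum>j\<in>{1..Suc J}. real (m j) * F j)"
      using ab(1) by (simp add: add.commute)
  qed
qed

lemma length_queries: "length (queries ts) = sum_list (map tk ts)"
  by (induction ts) auto

lemma set_queries: "S \<in> set (queries ts) \<Longrightarrow> \<exists>t\<in>set ts. S = tS t"
  by (induction ts) (auto split: if_splits)

lemma prod_ge:
  fixes xs :: "real list"
  assumes "\<And>x. x \<in> set xs \<Longrightarrow> 1 - e \<le> x \<and> x \<le> 1" "0 \<le> e" "e \<le> 1"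
  shows "prod_list xs \<ge> 1 - real (length xs) * e \<and> 0 \<le> prod_list xs \<and> prod_list xs \<le> 1"
  using assms(1)
proof (induction xs)
  case Nil
  then show ?case by simp
next
  case (Cons x xs)
  hence IH: "prod_list xs \<ge> 1 - real (length xs) * e" "0 \<le> prod_list xs" "prod_list xs \<le> 1" by auto
  have x: "1 - e \<le> x" "x \<le> 1" using Cons.prems by auto
  have "x * prod_list xs \<ge> (1 - e) * prod_list xs" using x IH by (intro mult_right_mono) auto
  moreover have "(1 - e) * prod_list xs \<ge> prod_list xs - e" using IH assms(2) by (simp add: algebra_simps)
    (metis mult_left_le mult.commute)
  moreover have "x * prod_list xs \<le> 1" using x IH assms by (intro mult_le_one) auto
  moreover have "0 \<le> x * prod_list xs" using x IH assms by auto
  ultimately show ?case using IH by (simp add: algebra_simps)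
qed

definition Tdist :: "nat \<Rightarrow> nat pmf \<Rightarrow> (nat \<times> nat) pmf" where
  "Tdist n q = pair_pmf (pmf_of_set {..<dd n}) q"

definition mk :: "nat \<Rightarrow> nat pmf \<Rightarrow> real \<Rightarrow> nat \<Rightarrow> nat \<times> nat \<Rightarrow> test" where
  "mk n q eps j a = Test (NN n (dd n) (fst a) (snd a)) (NN n (dd n) (Suc (fst a)) (snd a)) (kk n eps j)
     (measure_pmf.prob (cond_oracle q (NN n (dd n) (fst a) (snd a))) (NN n (dd n) (Suc (fst a)) (snd a))) (rr j)"

definition Tj :: "nat \<Rightarrow> nat pmf \<Rightarrow> real \<Rightarrow> nat \<Rightarrow> test pmf" where
  "Tj n q eps j = map_pmf (mk n q eps j) (Tdist n q)"

definition Tests :: "nat \<Rightarrow> nat pmf \<Rightarrow> real \<Rightarrow> test list pmf" where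
  "Tests n q eps = blk (mm n eps) (Tj n q eps) (JJ n eps)"

definition Alg :: nacond_alg where
  "Alg n q eps = map_pmf (\<lambda>ts. (queries ts, dect ts)) (Tests n q eps)"

lemma run_Alg:
  "measure_pmf.prob (run_alg Alg n q eps p) {True} = (\<integral>ts. prod_list (map (spass p) ts) \<partial>measure_pmf (Tests n q eps))"
proof -
  have "run_alg Alg n q eps p = bind_pmf (Tests n q eps) (\<lambda>ts. map_pmf (dect ts) (answers p (queries ts)))"
    by (simp add: run_alg_def Alg_def map_pmf_def bind_assoc_pmf bind_return_pmf)
  thus ?thesis by (simp add: measure_pmf_single pmf_bind acc_prod)
qed

lemma Tdist_support:
  assumes "is_dist_on n q" "n \<ge> 1"
  shows "set_pmf (Tdist n q) \<subseteq> {..<dd n} \<times> {1..n}"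
proof -
  have "0 \<in> {..<dd n}" using dd_facts(2)[OF assms(2)] by auto
  hence "{..<dd n} \<noteq> {}" by blast
  thus ?thesis using assms(1) by (auto simp: Tdist_def is_dist_on_def)
qed

lemma Tdist_pmf:
  assumes "n \<ge> 1" "t < dd n"
  shows "pmf (Tdist n q) (t, x) = pmf q x / real (dd n)"
proof -
  have "{..<dd n} \<noteq> {}" using assms by auto
  thus ?thesis using assms by (simp add: Tdist_def pmf_pair)
qed

lemma Tj_support:
  assumes "is_dist_on n q" "n \<ge> 1" "t \<in> set_pmf (Tj n q eps j)"
  shows "\<exists>a\<in>{..<dd n} \<times> {1..n}. t = mk n q eps j a"
  using assms Tdist_support[OF assms(1,2)] by (auto simp: Tj_def)

lemma E_Tj:
  assumes "is_dist_on n q" "n \<ge> 1"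
  shows "(\<integral>t. spass p t \<partial>measure_pmf (Tj n q eps j))
     = (\<Sum>a\<in>{..<dd n} \<times> {1..n}. spass p (mk n q eps j a) * (pmf q (snd a) / real (dd n)))"
proof -
  have "(\<integral>t. spass p t \<partial>measure_pmf (Tj n q eps j)) = (\<integral>a. spass p (mk n q eps j a) \<partial>measure_pmf (Tdist n q))"
    by (simp add: Tj_def)
  also have "\<dots> = (\<Sum>a\<in>{..<dd n} \<times> {1..n}. spass p (mk n q eps j a) * pmf (Tdist n q) a)"
    by (rule integral_measure_pmf_real) (use Tdist_support[OF assms] in auto)
  also have "\<dots> = (\<Sum>a\<in>{..<dd n} \<times> {1..n}. spass p (mk n q eps j a) * (pmf q (snd a) / real (dd n)))"
    by (intro sum.cong refl) (auto simp: Tdist_pmf[OF assms(2)])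
  finally show ?thesis .
qed

lemma Tests_facts:
  assumes q: "is_dist_on n q" and n: "n \<ge> 1" and eps: "0 < eps" "eps \<le> 1" and ts: "ts \<in> set_pmf (Tests n q eps)"
  shows "\<forall>t\<in>set ts. \<exists>j\<in>{1..JJ n eps}. \<exists>a\<in>{..<dd n} \<times> {1..n}. t = mk n q eps j a"
    and "real (length ts) \<le> real (M0 n eps)"
    and "real (length (queries ts)) \<le> query_bound (2 * 10^8) 3 n eps"
proof -
  note B = blk_support[OF ts[unfolded Tests_def]]
  show "\<forall>t\<in>set ts. \<exists>j\<in>{1..JJ n eps}. \<exists>a\<in>{..<dd n} \<times> {1..n}. t = mk n q eps j a"
    using B Tj_support[OF q n] by blast
  have "sum_list (map (\<lambda>_. 1::real) ts) \<le> (\<Sum>j\<in>{1..JJ n eps}. real (mm n eps j) * 1)"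
    using B[THEN conjunct2, rule_format, of "\<lambda>_. 1" "\<lambda>_. 1"] by simp
  also have "\<dots> = real (\<Sum>j\<in>{1..JJ n eps}. mm n eps j)" by simp
  also have "\<dots> \<le> real (M0 n eps)" using M0_facts(2)[OF n eps] by (simp only: of_nat_le_iff)
  finally show "real (length ts) \<le> real (M0 n eps)" by (simp add: sum_list_triv)
  have kk: "\<forall>j\<in>{1..JJ n eps}. \<forall>t\<in>set_pmf (Tj n q eps j). real (tk t) \<le> real (kk n eps j)"
    using Tj_support[OF q n] by (fastforce simp: mk_def)
  have "sum_list (map (\<lambda>t. real (tk t)) ts) \<le> (\<Sum>j\<in>{1..JJ n eps}. real (mm n eps j) * real (kk n eps j))"
    using B[THEN conjunct2, rule_format, of "\<lambda>t. real (tk t)" "\<lambda>j. real (kk n eps j)"] kk by blast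
  also have "\<dots> \<le> query_bound (2 * 10^8) 3 n eps" by (rule cost_bound[OF n eps])
  moreover have "real (sum_list (map tk ts)) = sum_list (map (\<lambda>t. real (tk t)) ts)"
    by (induction ts) auto
  ultimately show "real (length (queries ts)) \<le> query_bound (2 * 10^8) 3 n eps"
    by (simp add: length_queries)
qed

lemma completeness:
  assumes q: "is_dist_on n q" and n: "n \<ge> 1" and eps: "0 < eps" "eps \<le> 1"
  shows "measure_pmf.prob (run_alg Alg n q eps q) {True} \<ge> 2/3"
proof -
  let ?e = "1 / (3 * real (M0 n eps))"
  have M1: "real (M0 n eps) \<ge> 1" using M0_facts(1)[OF n eps] by simp
  have e01: "0 \<le> ?e" "?e \<le> 1" using M1 by auto
  have pt: "2/3 \<le> prod_list (map (spass q) ts)" if ts: "ts \<in> set_pmf (Tests n q eps)" for ts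
  proof -
    have each: "1 - ?e \<le> spass q t \<and> spass q t \<le> 1" if t: "t \<in> set ts" for t
    proof -
      obtain j a where j: "j \<in> {1..JJ n eps}" and tdef: "t = mk n q eps j a"
        using Tests_facts(1)[OF q n eps ts] t by blast
      have "spass q t \<ge> 1 - 2 * exp (-2 * real (tk t) * (tr t)\<^sup>2)"
        by (rule spass_null) (use kk_facts(2)[OF n eps, of j] in \<open>auto simp: tdef mk_def rr_def alpha_def\<close>)
      moreover have "2 * exp (-2 * real (tk t) * (tr t)\<^sup>2) \<le> ?e"
        using hoeff_param[OF n eps, of j] by (simp add: tdef mk_def)
      ultimately show ?thesis using spass_bounds(2) by (smt (verit))
    qed
    have "prod_list (map (spass q) ts) \<ge> 1 - real (length (map (spass q) ts)) * ?e"
      using prod_ge[of "map (spass q) ts" ?e] each e01 by auto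
    moreover have "real (length ts) * ?e \<le> real (M0 n eps) * ?e"
      using Tests_facts(2)[OF q n eps ts] e01 by (intro mult_right_mono) auto
    moreover have "real (M0 n eps) * ?e = 1/3" using M1 by simp
    ultimately show ?thesis by simp
  qed
  have b: "\<bar>prod_list (map (spass q) ts)\<bar> \<le> 1" for ts
    using prod_list_01[of "spass q" ts] spass_bounds by auto
  show ?thesis unfolding run_Alg
    by (rule measure_pmf.integral_ge_const[OF integrable_pmf_bounded[OF b]]) (rule AE_pmfI, rule pt)
qed

lemma soundness:
  assumes p: "is_dist_on n p" and q: "is_dist_on n q" and n: "n \<ge> 1" and eps: "0 < eps" "eps \<le> 1"
    and far: "dTV n p q \<ge> eps"
  shows "measure_pmf.prob (run_alg Alg n q eps p) {True} \<le> 1/3"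
proof -
  define d where "d = dd n"
  define A where "A = {..<d} \<times> {1..n}"
  define \<omega> where "\<omega> a = pmf q (snd a) / real d" for a :: "nat \<times> nat"
  define \<delta> where "\<delta> a = del n d p q (fst a) (snd a)" for a :: "nat \<times> nat"
  define J where "J = JJ n eps"
  have d1: "d \<ge> 1" "n \<le> 2 ^ d" using dd_facts[OF n] by (auto simp: d_def)
  have finA: "finite A" by (simp add: A_def)
  have sumA: "(\<Sum>a\<in>A. f a) = (\<Sum>t<d. \<Sum>x\<in>{1..n}. f (t, x))" for f :: "nat \<times> nat \<Rightarrow> real"
    unfolding A_def by (subst sum.cartesian_product) (simp add: case_prod_beta')
  have qsum: "(\<Sum>x\<in>{1..n}. pmf q x) = 1"
    using dist_full[OF q] by (simp add: measure_measure_pmf_finite)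
  have w0: "\<And>a. a \<in> A \<Longrightarrow> 0 \<le> \<omega> a" by (simp add: \<omega>_def)
  have w1: "(\<Sum>a\<in>A. \<omega> a) = 1"
  proof -
    have "(\<Sum>a\<in>A. \<omega> a) = (\<Sum>t<d. \<Sum>x\<in>{1..n}. pmf q x / real d)"
      by (simp add: sumA \<omega>_def)
    also have "\<dots> = (\<Sum>t<d. 1 / real d)" using qsum by (simp add: sum_divide_distrib[symmetric])
    also have "\<dots> = 1" using d1 by simp
    finally show ?thesis .
  qed
  have d01: "\<And>a. a \<in> A \<Longrightarrow> 0 \<le> \<delta> a \<and> \<delta> a \<le> 1"
  proof -
    fix a
    have "\<bar>u - v\<bar> \<le> 1" if "0 \<le> u" "u \<le> 1" "0 \<le> v" "v \<le> 1" for u v :: real using that by linarith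
    thus "0 \<le> \<delta> a \<and> \<delta> a \<le> 1" by (simp add: \<delta>_def del_def)
  qed
  have mu_le: "mu n eps \<le> (\<Sum>a\<in>A. \<omega> a * \<delta> a)"
  proof -
    have "(\<Sum>a\<in>A. \<omega> a * \<delta> a) = (\<Sum>t<d. \<Sum>x\<in>{1..n}. pmf q x * del n d p q t x) / real d"
      by (simp add: sumA \<omega>_def \<delta>_def sum_divide_distrib)
    moreover have "eps \<le> (\<Sum>t<d. \<Sum>x\<in>{1..n}. pmf q x * del n d p q t x)"
      using far dTV_bound[OF p q d1(2)] by linarith
    ultimately show ?thesis using d1 by (simp add: mu_def d_def[symmetric] divide_right_mono)
  qed
  have JJf: "J \<ge> 1" "1 / 2 ^ J \<le> mu n eps / 4" using JJ_facts[OF n eps] by (auto simp: J_def)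
  obtain j where j: "j \<in> {1..J}"
    and wj: "(\<Sum>a\<in>A. \<omega> a * (if \<delta> a \<ge> 1 / 2 ^ j then 1 else 0)) \<ge> 3 * 2 ^ j * mu n eps / (8 * J)"
    using bucket[OF finA w0 w1 d01 mu_le JJf] by blast
  define w where "w = (\<Sum>a\<in>A. \<omega> a * (if \<delta> a \<ge> 1 / 2 ^ j then 1 else 0))"
  have w01: "0 \<le> w" "w \<le> 1"
  proof -
    show "0 \<le> w" unfolding w_def using w0 by (intro sum_nonneg) auto
    have "w \<le> (\<Sum>a\<in>A. \<omega> a)" unfolding w_def using w0 by (intro sum_mono) auto
    thus "w \<le> 1" using w1 by simp
  qed
  have M1: "real (M0 n eps) \<ge> 1" using M0_facts(1)[OF n eps] by simp
  have ES: "(\<integral>t. spass p t \<partial>measure_pmf (Tj n q eps j)) \<le> 1 - 2/3 * w"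
  proof -
    have pt: "spass p (mk n q eps j a) \<le> 1 - 2/3 * (if \<delta> a \<ge> 1 / 2 ^ j then 1 else 0)" if a: "a \<in> A" for a
    proof (cases "\<delta> a \<ge> 1 / 2 ^ j")
      case True
      have "spass p (mk n q eps j a) \<le> 2 * exp (-2 * real (tk (mk n q eps j a)) * (tr (mk n q eps j a))\<^sup>2)"
      proof (rule spass_far)
        show "0 < tk (mk n q eps j a)" using kk_facts(2)[OF n eps, of j] by (simp add: mk_def)
        show "0 \<le> tr (mk n q eps j a)" by (simp add: mk_def rr_def)
        show "2 * tr (mk n q eps j a) \<le> \<bar>alpha p (mk n q eps j a) - ta (mk n q eps j a)\<bar>"
          using True by (simp add: mk_def rr_def alpha_def \<delta>_def del_def d_def)
      qed
      also have "\<dots> \<le> 1 / (3 * real (M0 n eps))" using hoeff_param[OF n eps, of j] by (simp add: mk_def)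
      also have "\<dots> \<le> 1/3" using M1 by (simp add: field_simps)
      finally show ?thesis using True by simp
    next
      case False
      then show ?thesis using spass_bounds(2) by simp
    qed
    have "(\<integral>t. spass p t \<partial>measure_pmf (Tj n q eps j)) = (\<Sum>a\<in>A. spass p (mk n q eps j a) * \<omega> a)"
      unfolding E_Tj[OF q n] by (simp add: A_def \<omega>_def d_def)
    also have "\<dots> \<le> (\<Sum>a\<in>A. (1 - 2/3 * (if \<delta> a \<ge> 1 / 2 ^ j then 1 else 0)) * \<omega> a)"
      using pt w0 by (intro sum_mono mult_right_mono) auto
    also have "\<dots> = (\<Sum>a\<in>A. \<omega> a) - 2/3 * w"
      by (simp add: w_def algebra_simps sum_subtractf sum_distrib_left)
    finally show ?thesis using w1 by simp
  qed
  have ES0: "0 \<le> (\<integral>t. spass p t \<partial>measure_pmf (Tj n q eps j))"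
    using spass_bounds by (intro integral_nonneg_AE) auto
  have mw: "real (mm n eps j) * w \<ge> 3"
  proof -
    have m: "0 < mu n eps" using mu_facts[OF n eps] by simp
    have Jp: "real J > 0" using JJf by simp
    have "real (mm n eps j) * w \<ge> (8 * real J / (2 ^ j * mu n eps)) * (3 * 2 ^ j * mu n eps / (8 * J))"
      using mm_ge[OF n eps, of j] wj m Jp by (intro mult_mono) (auto simp: J_def w_def)
    also have "(8 * real J / (2 ^ j * mu n eps)) * (3 * 2 ^ j * mu n eps / (8 * J)) = 3"
      using m Jp by (simp add: field_simps)
    finally show ?thesis .
  qed
  have b: "\<bar>prod_list (map (spass p) ts)\<bar> \<le> 1" for ts
    using prod_list_01[of "spass p" ts] spass_bounds by auto
  have "measure_pmf.prob (run_alg Alg n q eps p) {True}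
      \<le> (\<integral>ts. prod_list (map (spass p) ts) \<partial>measure_pmf (iid (mm n eps j) (Tj n q eps j)))"
    unfolding run_Alg Tests_def
    by (rule blk_le) (use spass_bounds j in \<open>auto simp: J_def\<close>)
  also have "\<dots> = (\<integral>t. spass p t \<partial>measure_pmf (Tj n q eps j)) ^ mm n eps j"
    by (rule E_iid) (use spass_bounds in auto)
  also have "\<dots> \<le> (1 - 2/3 * w) ^ mm n eps j"
    by (intro power_mono ES ES0)
  also have "\<dots> \<le> exp (- (2/3 * w)) ^ mm n eps j"
    using w01 by (intro power_mono) (auto simp: exp_ge_add_one_self[of "- (2/3 * w)", simplified])
  also have "\<dots> = exp (- (2/3) * (real (mm n eps j) * w))"
    by (simp add: exp_of_nat_mult[symmetric] mult_ac)
  also have "\<dots> \<le> exp (- 2)"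
    using mw by (simp add: mult.commute)
  also have "\<dots> \<le> 1/3"
  proof -
    have "3 \<le> exp (2::real)" using exp_ge_add_one_self[of 2] by simp
    thus ?thesis by (simp add: exp_minus field_simps)
  qed
  finally show ?thesis .
qed

theorem theorem3:
  shows "\<exists>(A :: nacond_alg) (C :: real) (k :: nat).
    \<forall>n q eps. n \<ge> 1 \<and> is_dist_on n q \<and> 0 < eps \<and> eps \<le> 1 \<longrightarrow>
      (\<forall>(Qs, dec) \<in> set_pmf (A n q eps).
          real (length Qs) \<le> query_bound C k n eps
          \<and> (\<forall>S \<in> set Qs. S \<noteq> {} \<and> S \<subseteq> {1..n}))
      \<and> (\<forall>p. is_dist_on n p \<longrightarrow>
           (p = q \<longrightarrow> measure_pmf.prob (run_alg A n q eps p) {True} \<ge> 2/3)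
         \<and> (dTV n p q \<ge> eps \<longrightarrow> measure_pmf.prob (run_alg A n q eps p) {False} \<ge> 2/3))"
  apply (rule exI[of _ Alg], rule exI[of _ "2 * 10^8"], rule exI[of _ 3], intro allI impI)
  subgoal premises h for n q eps
  proof -
  have n: "n \<ge> 1" and q: "is_dist_on n q" and eps: "0 < eps" "eps \<le> 1" using h by auto
  have X: "\<forall>(Qs, dec) \<in> set_pmf (Alg n q eps).
          real (length Qs) \<le> query_bound (2 * 10^8) 3 n eps
          \<and> (\<forall>S \<in> set Qs. S \<noteq> {} \<and> S \<subseteq> {1..n})"
  proof (clarify)
    fix Qs dec
    assume "(Qs, dec) \<in> set_pmf (Alg n q eps)"
    then obtain ts where ts: "ts \<in> set_pmf (Tests n q eps)" and Qs: "Qs = queries ts"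
      by (auto simp: Alg_def)
    show "real (length Qs) \<le> query_bound (2 * 10^8) 3 n eps \<and> (\<forall>S \<in> set Qs. S \<noteq> {} \<and> S \<subseteq> {1..n})"
    proof (intro conjI ballI)
      show "real (length Qs) \<le> query_bound (2 * 10^8) 3 n eps"
        using Tests_facts(3)[OF q n eps ts] Qs by simp
      fix S assume "S \<in> set Qs"
      then obtain t where t: "t \<in> set ts" "S = tS t" using set_queries Qs by blast
      then obtain j a where a: "a \<in> {..<dd n} \<times> {1..n}" "t = mk n q eps j a"
        using Tests_facts(1)[OF q n eps ts] by blast
      have S: "S = NN n (dd n) (fst a) (snd a)" using t a by (simp add: mk_def)
      show "S \<noteq> {}" using S a N_ne by auto
      show "S \<subseteq> {1..n}" using S N_sub by auto
    qed
  qed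
  have Y: "measure_pmf.prob (run_alg Alg n q eps p) {False} \<ge> 2/3"
    if p: "is_dist_on n p" and far: "dTV n p q \<ge> eps" for p
  proof -
    have "measure_pmf.prob (run_alg Alg n q eps p) {True} \<le> 1/3"
      by (rule soundness[OF p q n eps far])
    thus ?thesis by (simp add: measure_pmf_single pmf_False_conv_True)
  qed
  show ?thesis using X Y completeness[OF q n eps] by blast
  qed
  done


end
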